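(* For every integer $m\ge3$, $$K_m:=\int_0^\infty\left(\sqrt{1+t^m}-t^{m/2}\right)dt=\frac{B\!\left(\frac12,1+\frac1m\right)}{2\cos\left(\frac\pi m\right)}.$$
   Context: $B$ denotes the Euler beta function $B(z,w)=\Gamma(z)\Gamma(w)/\Gamma(z+w)$. *)

theory Defs
  imports "HOL-Analysis.Analysis"
begin

end

theory Submission
  imports Defs "HOL-Real_Asymp.Real_Asymp"
begin

lemma Gamma_refl_half_real:
  fixes z :: real
  shows "Gamma (1/2 + z) * Gamma (1/2 - z) = pi / cos (pi * z)"
proof -
  have "Gamma (complex_of_real (1/2+z)) * Gamma (1 - complex_of_real (1/2+z)) =
        of_real pi / sin (of_real pi * complex_of_real (1/2+z))"
    by (rule Gamma_reflection_complex)
  also have "1 - complex_of_real (1/2+z) = complex_of_real (1/2 - z)" by simp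
  also have "sin (of_real pi * complex_of_real (1/2+z)) = complex_of_real (sin (pi*(1/2+z)))"
    by (simp only: of_real_mult[symmetric] sin_of_real)
  finally have "complex_of_real (Gamma (1/2 + z) * Gamma (1/2 - z)) = complex_of_real (pi / sin (pi*(1/2+z)))"
    by (simp only: Gamma_complex_of_real of_real_mult of_real_divide)
  hence "Gamma (1/2 + z) * Gamma (1/2 - z) = pi / sin (pi*(1/2+z))" by (simp only: of_real_eq_iff)
  also have "sin (pi*(1/2+z)) = cos (pi*z)"
    by (simp add: distrib_left sin_add)
  finally show ?thesis .
qed

lemma Gamma_dup_real:
  fixes z :: real
  assumes "z > 0"
  shows "Gamma z * Gamma (z + 1/2) = 2 powr (1 - 2*z) * sqrt pi * Gamma (2*z)"
proof -
  have nz: "complex_of_real z \<notin> \<int>\<^sub>\<le>\<^sub>0" "complex_of_real z + 1/2 \<notin> \<int>\<^sub>\<le>\<^sub>0"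
    using assms by (auto elim!: nonpos_Ints_cases simp: complex_eq_iff)
  have "Gamma (complex_of_real z) * Gamma (complex_of_real z + 1/2) =
        exp ((1 - 2*complex_of_real z) * of_real (ln 2)) * of_real (sqrt pi) * Gamma (2*complex_of_real z)"
    by (rule Gamma_legendre_duplication[OF nz])
  also have "exp ((1 - 2*complex_of_real z) * of_real (ln 2)) = complex_of_real (2 powr (1 - 2*z))"
    by (simp add: powr_def exp_of_real[symmetric] mult.commute)
  finally have "complex_of_real (Gamma z * Gamma (z + 1/2)) = complex_of_real (2 powr (1 - 2*z) * sqrt pi * Gamma (2*z))"
    using Gamma_complex_of_real[of z] Gamma_complex_of_real[of "z+1/2"] Gamma_complex_of_real[of "2*z"]
    by simp
  thus ?thesis by (simp only: of_real_eq_iff)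
qed

lemma Beta_aux:
  fixes z P G2 Gm Gp Gz cc sp :: real
  assumes "Gp > 0" "cc > 0" "Gp*Gm = sp * sp/cc" "Gz*Gp = 4*P * sp*G2" "0 < z"
  shows "2*z*P*(G2*Gm/Gp + (1/2-z)/(1/2+z)*(G2*Gm/Gp)) = sp*(z*Gz)/((1/2+z)*Gp)/(2*cc)"
proof -
  have "(4*P*G2*Gm*cc)*Gp = 4*P*G2*cc*(Gp*Gm)" by (simp add: algebra_simps)
  also have "\<dots> = 4*P*G2 * sp * sp" using assms(2,3) by simp
  also have "\<dots> = (sp*Gz)*Gp" using assms(4) by (simp add: algebra_simps)
  finally have key: "4*P*G2*Gm*cc = sp*Gz" using assms(1) by simp
  have nz: "1/2+z \<noteq> 0" "Gp \<noteq> 0" "cc \<noteq> 0" using assms by auto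
  have e1: "(1/2-z)/(1/2+z) = 1/(1/2+z) - 1" using nz by (simp add: field_simps)
  have "2*z*P*(G2*Gm/Gp + (1/2-z)/(1/2+z)*(G2*Gm/Gp)) = 2*z*P*(G2*Gm/Gp)/(1/2+z)"
    unfolding e1 by (simp add: algebra_simps)
  also have "\<dots> = z*(4*P*G2*Gm*cc)/((1/2+z)*Gp)/(2*cc)"
    using nz by (simp add: divide_simps)
  also have "\<dots> = sp*(z*Gz)/((1/2+z)*Gp)/(2*cc)" by (simp add: key)
  finally show ?thesis .
qed

lemma Beta_value:
  fixes z :: real
  assumes z: "0 < z" "z < 1/2"
  shows "(2*z) * 2 powr (-(2*z)-1) * (Beta (2*z) (1/2 - z) + Beta (2*z) (3/2 - z))
         = Beta (1/2) (1 + z) / (2 * cos (pi * z))"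
proof -
  have cpos: "cos (pi * z) > 0"
  proof (rule cos_gt_zero_pi)
    have "pi * z < pi * (1/2)" using z pi_gt_zero by (intro mult_strict_left_mono) auto
    thus "pi * z < pi / 2" by simp
    have "0 < pi * z" using z pi_gt_zero by (simp add: mult_pos_pos)
    thus "- (pi / 2) < pi * z" using pi_gt_zero by linarith
  qed
  have b1: "1/2 - z \<notin> \<int>\<^sub>\<le>\<^sub>0" using z by (auto elim!: nonpos_Ints_cases)
  have "(2*z + (1/2 - z)) * Beta (2*z) ((1/2 - z) + 1) = (1/2 - z) * Beta (2*z) (1/2 - z)"
    by (rule Beta_plus1_right[OF b1])
  hence B2: "Beta (2*z) (3/2 - z) = (1/2 - z) / (1/2 + z) * Beta (2*z) (1/2 - z)"
    using z by (simp add: field_simps)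
  have Bdef1: "Beta (2*z) (1/2 - z) = Gamma (2*z) * Gamma (1/2 - z) / Gamma (1/2 + z)"
    unfolding Beta_def by (rule arg_cong[where f="\<lambda>u. _ / Gamma u"]) simp
  have G32: "Gamma (3/2 + z) = (1/2 + z) * Gamma (1/2 + z)"
  proof -
    have "Gamma ((1/2 + z) + 1) = (1/2 + z) * Gamma (1/2 + z)"
      by (rule Gamma_plus1) (use z in \<open>auto elim!: nonpos_Ints_cases\<close>)
    moreover have "(1/2 + z) + 1 = 3/2 + z" by simp
    ultimately show ?thesis by simp
  qed
  have G1z: "Gamma (1 + z) = z * Gamma z"
  proof -
    have "z \<notin> \<int>\<^sub>\<le>\<^sub>0" using z by (auto elim!: nonpos_Ints_cases)
    thus ?thesis using Gamma_plus1[of z] by (simp add: add_ac)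
  qed
  have Bdef2: "Beta (1/2) (1 + z) = sqrt pi * (z * Gamma z) / ((1/2 + z) * Gamma (1/2 + z))"
  proof -
    have "1/2 + (1+z) = 3/2 + z" by simp
    thus ?thesis unfolding Beta_def by (simp only: Gamma_one_half_real G32 G1z)
  qed
  have R: "Gamma (1/2 + z) * Gamma (1/2 - z) = pi / cos (pi * z)" by (rule Gamma_refl_half_real)
  have D: "Gamma z * Gamma (z + 1/2) = 2 powr (1 - 2*z) * sqrt pi * Gamma (2*z)"
    using Gamma_dup_real z by simp
  have Gpos: "Gamma (1/2 + z) > 0" using z by simp
  have p1: "2 powr (1 - 2*z) = 4 * 2 powr (-(2*z)-1)" 
    by (simp add: powr_diff powr_minus powr_add field_simps)
  have pp: "2 powr (-(2*z)-1) > 0" by simp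
  have spi: "sqrt pi * sqrt pi = pi" by simp
  show ?thesis
    unfolding B2 Bdef1 Bdef2
  proof (rule Beta_aux[OF Gpos cpos])
    show "Gamma (1 / 2 + z) * Gamma (1 / 2 - z) = sqrt pi * sqrt pi / cos (pi * z)"
      using R by simp
    show "Gamma z * Gamma (1 / 2 + z) = 4 * 2 powr (- (2 * z) - 1) * sqrt pi * Gamma (2 * z)"
      using D p1 by (simp add: add.commute)
  qed (use z in simp)
qed

lemma fg_eq:
  fixes x r :: real and m :: nat
  assumes x: "0 < x" "x < 1" and rm: "r * real m = 2" and m: "m > 0"
  shows "sqrt (1 + ((x / (2 * sqrt (1 - x))) powr r) ^ m) - ((x / (2 * sqrt (1 - x))) powr r) powr (real m / 2) = sqrt (1 - x)"
proof -
  define s where "s = sqrt (1 - x)"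
  have s: "s > 0" "s * s = 1 - x" using x by (auto simp: s_def)
  define h where "h = x / (2 * s)"
  have hpos: "h > 0" using x s by (simp add: h_def)
  have p1: "(h powr r) powr (real m / 2) = h"
    using hpos rm by (simp add: powr_powr)
  have "(h powr r) ^ m = (h powr r) powr (real m)" using hpos by (simp add: powr_realpow)
  also have "\<dots> = h powr 2" using rm by (simp add: powr_powr)
  also have "\<dots> = h ^ 2" using hpos powr_realpow[of h 2] by simp
  finally have p2: "(h powr r) ^ m = h ^ 2" .
  have "1 + h ^ 2 = ((2 - x) / (2 * s)) ^ 2"
    using s unfolding h_def by (simp add: field_simps power2_eq_square)
  hence "sqrt (1 + h ^ 2) = (2 - x) / (2 * s)" using x s by simp
  hence "sqrt (1 + (h powr r) ^ m) - (h powr r) powr (real m / 2) = (2 - x) / (2 * s) - x / (2 * s)"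
    unfolding p1 p2 by (simp add: h_def)
  also have "\<dots> = (1 - x) / s" using s by (simp add: field_simps)
  also have "\<dots> = s" using s(1) by (simp flip: s(2))
  finally show ?thesis unfolding h_def s_def .
qed

lemma h_deriv:
  fixes x :: real
  assumes x: "0 < x" "x < 1"
  shows "((\<lambda>x. x / (2 * sqrt (1 - x))) has_real_derivative (2 - x) / (4 * (1 - x) * sqrt (1 - x))) (at x)"
proof -
  have s: "sqrt (1 - x) > 0" "sqrt (1-x) * sqrt (1-x) = 1 - x" using x by auto
  have d0: "((\<lambda>x. 1 - x) has_real_derivative -1) (at x)"
    by (rule derivative_eq_intros refl)+ simp
  have d1: "((\<lambda>x. sqrt (1 - x)) has_real_derivative inverse (sqrt (1 - x)) / 2 * (-1)) (at x)"
    using DERIV_chain2[OF DERIV_real_sqrt d0] x by simp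
  have d2: "((\<lambda>x. 2 * sqrt (1 - x)) has_real_derivative 2 * (inverse (sqrt (1 - x)) / 2 * (-1))) (at x)"
    by (rule DERIV_cmult[OF d1])
  have d3: "((\<lambda>x. x / (2 * sqrt (1 - x))) has_real_derivative
     (1 * (2 * sqrt (1 - x)) - x * (2 * (inverse (sqrt (1 - x)) / 2 * (-1)))) / ((2 * sqrt (1 - x)) * (2 * sqrt (1 - x)))) (at x)"
    by (rule DERIV_divide[OF DERIV_ident d2]) (use s in simp)
  show ?thesis
  proof (rule DERIV_cong[OF d3])
    show "(1 * (2 * sqrt (1 - x)) - x * (2 * (inverse (sqrt (1 - x)) / 2 * (-1)))) / ((2 * sqrt (1 - x)) * (2 * sqrt (1 - x))) =
      (2 - x) / (4 * (1 - x) * sqrt (1 - x))"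
      using s x by (simp add: field_simps)
  qed
qed

lemma inv_eq_helper: "(a::real) * b = 1 \<Longrightarrow> 1 / a = b"
proof -
  assume h: "a * b = 1"
  hence "a \<noteq> 0" by auto
  thus ?thesis using h by (simp add: field_simps)
qed

definition FF :: "real \<Rightarrow> real \<Rightarrow> real" where
  "FF r x = r * 2 powr (-r-1) * (2 - x) * x powr (r-1) * (1-x) powr (-(r+1)/2)"

lemma g_deriv:
  fixes x r :: real
  assumes x: "0 < x" "x < 1"
  shows "((\<lambda>x. (x / (2 * sqrt (1 - x))) powr r) has_real_derivative FF r x / sqrt (1 - x)) (at x)"
proof -
  define s where "s = sqrt (1 - x)"
  have s: "s > 0" "s * s = 1 - x" using x by (auto simp: s_def)
  define h where "h = x / (2 * s)"
  have hpos: "h > 0" using x s by (simp add: h_def)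
  have d: "((\<lambda>x. (x / (2 * sqrt (1 - x))) powr r) has_real_derivative
      r * h powr (r - 1) * ((2 - x) / (4 * (1 - x) * s))) (at x)"
    using DERIV_fun_powr[OF h_deriv[OF x], of r] hpos by (simp add: h_def s_def)
  have sp: "s = (1 - x) powr (1/2)" using x by (simp add: s_def powr_half_sqrt)
  have A: "2 powr (r - 1) * 2 powr (-r-1) = 1/4"
  proof -
    have "2 powr (r - 1) * 2 powr (-r-1) = (2::real) powr (-2)" by (simp add: powr_add[symmetric])
    also have "\<dots> = 1/4" by (simp add: powr_minus_divide)
    finally show ?thesis .
  qed
  have B: "(1 - x) * (1 - x) powr ((r-1)/2) * (1-x) powr (-(r+1)/2) = 1"
  proof -
    have "(1 - x) * (1 - x) powr ((r-1)/2) * (1-x) powr (-(r+1)/2) = (1-x) powr (1 + (r-1)/2 + (-(r+1)/2))"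
      using x by (simp add: powr_add)
    also have "1 + (r-1)/2 + (-(r+1)/2) = 0" by (simp add: field_simps)
    finally show ?thesis using x by simp
  qed
  have H: "h powr (r - 1) = x powr (r-1) / (2 powr (r-1) * (1 - x) powr ((r-1)/2))"
    unfolding h_def powr_divide powr_mult sp powr_powr by simp
  have pos: "2 powr (r-1) > 0" "(1 - x) powr ((r-1)/2) > 0" "1 - x > 0" using x by auto
  show ?thesis
  proof (rule DERIV_cong[OF d])
    have "r * h powr (r - 1) * ((2 - x) / (4 * (1 - x) * s)) =
          r * (2 - x) * x powr (r-1) / s * (1 / (4 * (2 powr (r-1)) * ((1 - x) * (1 - x) powr ((r-1)/2))))"
      unfolding H using pos s by (simp add: field_simps)
    also have "1 / (4 * (2 powr (r-1)) * ((1 - x) * (1 - x) powr ((r-1)/2))) = 2 powr (-r-1) * (1-x) powr (-(r+1)/2)"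
    proof (rule inv_eq_helper)
      have "(4 * 2 powr (r-1) * ((1-x)*(1-x) powr ((r-1)/2))) * (2 powr(-r-1) * (1-x) powr(-(r+1)/2))
          = 4*(2 powr (r-1)*2 powr(-r-1)) * ((1-x)*(1-x) powr ((r-1)/2)*(1-x) powr(-(r+1)/2))"
        by (simp only: ac_simps)
      also have "\<dots> = 1" unfolding A B by simp
      finally show "(4 * 2 powr (r-1) * ((1-x)*(1-x) powr ((r-1)/2))) * (2 powr(-r-1) * (1-x) powr(-(r+1)/2)) = 1" .
    qed
    finally show "r * h powr (r - 1) * ((2 - x) / (4 * (1 - x) * s)) = FF r x / sqrt (1 - x)"
      unfolding FF_def s_def by (simp add: field_simps)
  qed
qed

lemma lim_right:
  fixes r :: real assumes r: "r > 0"
  shows "((\<lambda>x. (x / (2 * sqrt (1 - x))) powr r) \<longlongrightarrow> 0) (at_right 0)"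
proof (rule tendsto_zero_powrI)
  show "((\<lambda>x::real. x / (2 * sqrt (1 - x))) \<longlongrightarrow> 0) (at_right 0)" by real_asymp
  show "\<forall>\<^sub>F x in at_right 0. 0 \<le> x / (2 * sqrt (1 - x::real))"
    by (rule eventually_at_rightI[of 0 1]) auto
qed (use r in auto)

lemma lim_left:
  fixes r :: real assumes r: "r > 0"
  shows "filterlim (\<lambda>x. (x / (2 * sqrt (1 - x))) powr r) at_top (at_left 1)"
proof (rule filterlim_compose[OF real_powr_at_top[OF r]])
  show "filterlim (\<lambda>x::real. x / (2 * sqrt (1 - x))) at_top (at_left 1)" by real_asymp
qed

theorem lemmaA1:
  fixes m :: nat
  assumes "m \<ge> 3"
  shows "((\<lambda>t::real. sqrt (1 + t ^ m) - t powr (real m / 2)) has_integral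
           (Beta (1/2) (1 + 1 / real m) / (2 * cos (pi / real m)))) {0..}"
proof -
  define z where "z = 1 / real m"
  define r where "r = 2 * z"
  define c where "c = r * 2 powr (-r-1)"
  define f where "f = (\<lambda>t::real. sqrt (1 + t ^ m) - t powr (real m / 2))"
  define g where "g = (\<lambda>x::real. (x / (2 * sqrt (1 - x))) powr r)"
  define g' where "g' = (\<lambda>x. FF r x / sqrt (1 - x))"
  define Bc where "Bc = (\<lambda>x::real. c * (x powr (r - 1) * (1 - x) powr ((1/2 - z) - 1)) +
                                 c * (x powr (r - 1) * (1 - x) powr ((3/2 - z) - 1)))"
  have m0: "real m \<ge> 3" using assms by simp
  have z: "0 < z" "z < 1/2" using m0 by (auto simp: z_def field_simps)
  have r: "r > 0" "r * real m = 2" using m0 by (auto simp: r_def z_def)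
  have gpos: "g x > 0" if "0 < x" "x < 1" for x
    using that by (simp add: g_def)
  have fg: "f (g x) = sqrt (1 - x)" if x: "0 < x" "x < 1" for x
    unfolding f_def g_def using fg_eq[OF x r(2)] m0 by simp
  have FFnn: "FF r x \<ge> 0" if "0 \<le> x" "x \<le> 1" for x
    using that r unfolding FF_def by (intro mult_nonneg_nonneg) auto
  have fgB: "f (g x) * g' x = Bc x" if x: "0 < x" "x < 1" for x
  proof -
    have s: "sqrt (1 - x) > 0" using x by simp
    have "f (g x) * g' x = FF r x" unfolding fg[OF x] g'_def using s by simp
    also have "\<dots> = Bc x"
    proof -
      have e1: "(1/2 - z) - 1 = -(r+1)/2" by (simp add: r_def field_simps)
      have e2: "(1 - x) powr ((3/2 - z) - 1) = (1 - x) * (1 - x) powr (-(r+1)/2)"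
      proof -
        have "(3/2 - z) - 1 = 1 + (-(r+1)/2)" by (simp add: r_def field_simps)
        thus ?thesis using x by (simp add: powr_add)
      qed
      show ?thesis unfolding Bc_def FF_def e1 e2 c_def by (simp add: algebra_simps)
    qed
    finally show ?thesis .
  qed
  have B1: "((\<lambda>x. x powr (r - 1) * (1 - x) powr ((1/2 - z) - 1)) has_integral Beta r (1/2 - z)) {0<..<1}"
    using has_integral_Beta_real[of r "1/2 - z"] r z by (simp add: has_integral_Icc_iff_Ioo)
  have B2: "((\<lambda>x. x powr (r - 1) * (1 - x) powr ((3/2 - z) - 1)) has_integral Beta r (3/2 - z)) {0<..<1}"
    using has_integral_Beta_real[of r "3/2 - z"] r z by (simp add: has_integral_Icc_iff_Ioo)
  have BcI: "(Bc has_integral (c * Beta r (1/2 - z) + c * Beta r (3/2 - z))) {0<..<1}"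
    unfolding Bc_def by (intro has_integral_add has_integral_mult_right B1 B2)
  have val: "c * Beta r (1/2 - z) + c * Beta r (3/2 - z) = Beta (1/2) (1 + 1 / real m) / (2 * cos (pi / real m))"
  proof -
    have "c * Beta r (1/2 - z) + c * Beta r (3/2 - z) = (2*z) * 2 powr (-(2*z)-1) * (Beta (2*z) (1/2 - z) + Beta (2*z) (3/2 - z))"
      by (simp add: c_def r_def algebra_simps)
    also have "\<dots> = Beta (1/2) (1 + z) / (2 * cos (pi * z))" by (rule Beta_value[OF z])
    finally show ?thesis by (simp add: z_def)
  qed
  have Bint: "set_integrable lborel {0<..<1} Bc"
  proof -
    have i1: "set_integrable lborel {0<..<1} (\<lambda>x::real. x powr (r - 1) * (1 - x) powr ((1/2 - z) - 1))"
      by (rule set_integrable_subset[OF integrable_Beta]) (use r z in auto)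
    have i2: "set_integrable lborel {0<..<1} (\<lambda>x::real. x powr (r - 1) * (1 - x) powr ((3/2 - z) - 1))"
      by (rule set_integrable_subset[OF integrable_Beta]) (use r z in auto)
    show ?thesis unfolding Bc_def by (intro set_integral_add set_integrable_mult_right i1 i2)
  qed
  have fgint: "set_integrable lborel (einterval (ereal 0) (ereal 1)) (\<lambda>x. f (g x) * g' x)"
    using Bint by (subst set_integrable_cong[OF refl refl, of _ _ Bc]) (auto simp: fgB)
  have main:
    "set_integrable lborel (einterval (ereal 0) \<infinity>) f"
    "(LBINT x=ereal 0..\<infinity>. f x) = (LBINT x=ereal 0..ereal 1. (f (g x) * g' x))"
  proof -
    note substI = interval_integral_substitution_nonneg[of "ereal 0" "ereal 1" g g' f "ereal 0" "\<infinity>"]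
      have p1: "ereal 0 < ereal 1" by simp
      have p2: "(g has_real_derivative g' x) (at x)" if "ereal 0 < ereal x" "ereal x < ereal 1" for x
        using that unfolding g_def g'_def by (intro g_deriv) auto
      have p3: "isCont f (g x)" if "ereal 0 < ereal x" "ereal x < ereal 1" for x
        using gpos[of x] that unfolding f_def by (auto intro!: continuous_intros)
      have p4: "isCont g' x" if "ereal 0 < ereal x" "ereal x < ereal 1" for x
        using that unfolding g'_def FF_def by (auto intro!: continuous_intros)
      have p5: "0 \<le> f (g x)" if "ereal 0 < ereal x" "ereal x < ereal 1" for x
        using that fg[of x] by auto
      have p6: "0 \<le> g' x" if "ereal 0 \<le> ereal x" "ereal x \<le> ereal 1" for x
        using that FFnn[of x] unfolding g'_def by auto
      have p7: "((ereal \<circ> g \<circ> real_of_ereal) \<longlongrightarrow> ereal 0) (at_right (ereal 0))"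
        unfolding ereal_tendsto_simps1(2) ereal_tendsto_simps2(1) using lim_right[OF r(1)] by (simp add: g_def)
      have p8: "((ereal \<circ> g \<circ> real_of_ereal) \<longlongrightarrow> \<infinity>) (at_left (ereal 1))"
        unfolding ereal_tendsto_simps1(1) ereal_tendsto_simps2(2) using lim_left[OF r(1)] by (simp add: g_def)
      have p9: "set_integrable lborel (einterval (ereal 0) (ereal 1)) (\<lambda>x. f (g x) * g' x)" by (rule fgint)
    show "set_integrable lborel (einterval (ereal 0) \<infinity>) f"
      "(LBINT x=ereal 0..\<infinity>. f x) = (LBINT x=ereal 0..ereal 1. (f (g x) * g' x))"
      using substI[OF p1 p2 p3 p4 p5 p6 p7 p8 p9] by auto
  qed
  have I1: "(LBINT x=ereal 0..ereal 1. (f (g x) * g' x)) = integral {0<..<1} (\<lambda>x. f (g x) * g' x)"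
    using set_borel_integral_eq_integral(2)[OF fgint]
    by (simp add: interval_lebesgue_integral_def)
  have I2: "integral {0<..<1} (\<lambda>x. f (g x) * g' x) = c * Beta r (1/2 - z) + c * Beta r (3/2 - z)"
  proof (rule integral_unique)
    show "((\<lambda>x. f (g x) * g' x) has_integral c * Beta r (1/2 - z) + c * Beta r (3/2 - z)) {0<..<1}"
      using BcI by (subst has_integral_cong[of _ _ Bc]) (auto simp: fgB)
  qed
  have fI: "(f has_integral (LBINT x=ereal 0..\<infinity>. f x)) {0<..}"
  proof -
    have "set_integrable lborel {0<..} f" using main(1) by simp
    from set_borel_integral_eq_integral[OF this]
    have "f integrable_on {0<..}" "(LINT x:{0<..}|lborel. f x) = integral {0<..} f" by auto
    thus ?thesis by (simp add: interval_lebesgue_integral_def has_integral_integral)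
  qed
  have fI2: "(f has_integral (Beta (1/2) (1 + 1 / real m) / (2 * cos (pi / real m)))) {0<..}"
    using fI unfolding main(2) I1 I2 val .
  have "(f has_integral (Beta (1/2) (1 + 1 / real m) / (2 * cos (pi / real m)))) {0..}"
  proof (subst has_integral_spike_set_eq)
    show "negligible {x \<in> {0..} - {0<..}. f x \<noteq> 0}"
      by (rule negligible_subset[of "{0}"]) auto
    show "negligible {x \<in> {0<..} - {0..}. f x \<noteq> 0}"
      by (rule negligible_subset[OF negligible_empty]) auto
  qed (rule fI2)
  thus ?thesis unfolding f_def .
qed

end
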